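(* Let $A\subseteq\mathbb R^{d_x}$ be a set symmetric about the origin, let $W\sim N(0,I_{d_x})$ and $\bar W=W\mathbf 1\{W\in A\}$. Then $\bar W$ is $4$-sub-Gaussian, and hence for any matrix $H$ with $d_x$ columns, $H\bar W$ is $4\|H\|_{op}^2$-sub-Gaussian.
   Context: A random vector $Z$ is $s^2$-sub-Gaussian if $\mathbb{E}\exp(\lambda\langle u,Z\rangle)\le\exp(\lambda^2s^2/2)$ for all unit vectors $u$ and all $\lambda\in\mathbb R$. $\|H\|_{op}$ is the largest singular value of $H$. *)

theory Defs
  imports "HOL-Probability.Probability"
begin

definition std_gaussian_vec :: "(real ^ 'n::finite) measure" where
  "std_gaussian_vec = density lborel
     (\<lambda>x. ennreal ((2 * pi) powr (- real CARD('n) / 2) * exp (- (norm x)\<^sup>2 / 2)))"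

definition sub_gaussian :: "'a measure \<Rightarrow> ('a \<Rightarrow> 'b::real_inner) \<Rightarrow> real \<Rightarrow> bool" where
  "sub_gaussian M Z s2 \<longleftrightarrow>
     (\<forall>u::'b. norm u = 1 \<longrightarrow> (\<forall>l::real.
        (\<integral>\<^sup>+ \<omega>. ennreal (exp (l * inner u (Z \<omega>))) \<partial>M) \<le> ennreal (exp (l\<^sup>2 * s2 / 2))))"

definition op_norm :: "real ^ 'n::finite ^ 'm::finite \<Rightarrow> real" where
  "op_norm H = onorm (\<lambda>x. H *v x)"

end

theory Submission
  imports Defs
begin

definition gd :: "real ^ 'n::finite \<Rightarrow> real" where
  "gd x = (2 * pi) powr (- real CARD('n) / 2) * exp (- (norm x)\<^sup>2 / 2)"

lemma gd_measurable[measurable]: "gd \<in> borel_measurable borel"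
  unfolding gd_def by measurable

lemma gd_nonneg: "gd x \<ge> 0" unfolding gd_def by simp

lemma gd_uminus: "gd (- x) = gd x" unfolding gd_def by simp

lemma gd_shift: "gd x * exp (inner v x) = exp ((norm v)\<^sup>2 / 2) * gd (x - v)"
proof -
  have "(norm (x - v))\<^sup>2 = (norm x)\<^sup>2 - 2 * inner v x + (norm v)\<^sup>2"
    by (simp add: power2_norm_eq_inner inner_diff inner_commute)
  then have "- (norm x)\<^sup>2 / 2 + inner v x = (norm v)\<^sup>2 / 2 + - (norm (x - v))\<^sup>2 / 2"
    by linarith
  then show ?thesis unfolding gd_def
    by (simp add: exp_add[symmetric] mult_ac)
qed

lemma std_gaussian_vec_eq: "std_gaussian_vec = density lborel (\<lambda>x. ennreal (gd x))"
  unfolding std_gaussian_vec_def gd_def ..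

lemma lborel_uminus_vec: "distr lborel borel uminus = (lborel :: (real^'n::finite) measure)"
  by (subst lborel_affine[of "-1" 0]) (auto simp: density_1 one_ennreal_def[symmetric])

lemma nn_integral_lborel_uminus:
  fixes h :: "real ^ 'n::finite \<Rightarrow> ennreal"
  assumes [measurable]: "h \<in> borel_measurable borel"
  shows "(\<integral>\<^sup>+ x. h (- x) \<partial>lborel) = (\<integral>\<^sup>+ x. h x \<partial>lborel)"
proof -
  have "(\<integral>\<^sup>+ x. h x \<partial>lborel) = (\<integral>\<^sup>+ x. h x \<partial>(distr lborel borel uminus))"
    by (simp add: lborel_uminus_vec)
  also have "\<dots> = (\<integral>\<^sup>+ x. h (- x) \<partial>lborel)"
    by (subst nn_integral_distr) auto
  finally show ?thesis ..
qed

lemma nn_integral_lborel_plus: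
  fixes h :: "real ^ 'n::finite \<Rightarrow> ennreal"
  assumes [measurable]: "h \<in> borel_measurable borel"
  shows "(\<integral>\<^sup>+ x. h (c + x) \<partial>lborel) = (\<integral>\<^sup>+ x. h x \<partial>lborel)"
proof -
  have "(\<integral>\<^sup>+ x. h x \<partial>lborel) = (\<integral>\<^sup>+ x. h x \<partial>(distr lborel borel ((+) c)))"
    by (simp add: lborel_distr_plus)
  also have "\<dots> = (\<integral>\<^sup>+ x. h (c + x) \<partial>lborel)"
    by (subst nn_integral_distr) auto
  finally show ?thesis ..
qed

lemma cosh_like: "2 \<le> exp (b::real) + exp (- b)"
  using exp_ge_add_one_self[of b] exp_ge_add_one_self[of "-b"] by linarith

lemma key:
  fixes M :: "'a measure" and W :: "'a \<Rightarrow> real ^ 'n::finite" and A :: "(real ^ 'n) set"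
  assumes "prob_space M"
    and Wm[measurable]: "W \<in> borel_measurable M"
    and dW: "distr M borel W = std_gaussian_vec"
    and Am[measurable]: "A \<in> sets borel"
    and sym: "\<And>x. x \<in> A \<Longrightarrow> - x \<in> A"
  shows "(\<integral>\<^sup>+ \<omega>. ennreal (exp (inner v (if W \<omega> \<in> A then W \<omega> else 0))) \<partial>M)
           \<le> ennreal (exp ((norm v)\<^sup>2 / 2))"
proof -
  define F where "F x = (if x \<in> A then x else (0::real^'n))" for x
  have Fm[measurable]: "F \<in> borel_measurable borel" unfolding F_def by measurable
  have Fneg: "F (- x) = - F x" for x
  proof -
    have "(- x \<in> A) = (x \<in> A)" using sym[of x] sym[of "-x"] by auto
    then show ?thesis unfolding F_def by auto
  qed
  have tot: "(\<integral>\<^sup>+ x. ennreal (gd (x::real^'n)) \<partial>lborel) = 1"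
  proof -
    interpret prob_space M by fact
    have "emeasure (distr M borel W) UNIV = 1"
      by (subst emeasure_distr) (auto simp: emeasure_space_1[symmetric] intro: arg_cong[where f="emeasure M"])
    then show ?thesis
      by (simp add: dW std_gaussian_vec_eq emeasure_density)
  qed
  have J: "(\<integral>\<^sup>+ x. ennreal (gd x) * ennreal (exp (inner w x)) \<partial>lborel) = ennreal (exp ((norm w)\<^sup>2 / 2))" for w :: "real^'n"
  proof -
    have "(\<integral>\<^sup>+ x. ennreal (gd x) * ennreal (exp (inner w x)) \<partial>lborel)
        = (\<integral>\<^sup>+ x. ennreal (exp ((norm w)\<^sup>2 / 2)) * ennreal (gd (x - w)) \<partial>lborel)"
      by (intro nn_integral_cong) (simp add: ennreal_mult''[symmetric] gd_shift gd_nonneg)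
    also have "\<dots> = ennreal (exp ((norm w)\<^sup>2 / 2)) * (\<integral>\<^sup>+ x. ennreal (gd (x - w)) \<partial>lborel)"
      by (rule nn_integral_cmult) measurable
    also have "(\<integral>\<^sup>+ x. ennreal (gd (x - w)) \<partial>lborel) = (\<integral>\<^sup>+ x. ennreal (gd ((- w) + x)) \<partial>lborel)"
      by (simp add: add.commute)
    also have "\<dots> = 1"
      by (subst nn_integral_lborel_plus[where h="\<lambda>x. ennreal (gd x)"]) (auto simp: tot)
    finally show ?thesis by simp
  qed
  define I where "I = (\<integral>\<^sup>+ x. ennreal (gd x) * ennreal (exp (inner v (F x))) \<partial>lborel)"
  have step1: "(\<integral>\<^sup>+ \<omega>. ennreal (exp (inner v (if W \<omega> \<in> A then W \<omega> else 0))) \<partial>M) = I"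
  proof -
    have "(\<integral>\<^sup>+ \<omega>. ennreal (exp (inner v (if W \<omega> \<in> A then W \<omega> else 0))) \<partial>M)
        = (\<integral>\<^sup>+ \<omega>. ennreal (exp (inner v (F (W \<omega>)))) \<partial>M)" by (simp add: F_def)
    also have "\<dots> = (\<integral>\<^sup>+ x. ennreal (exp (inner v (F x))) \<partial>(distr M borel W))"
      by (subst nn_integral_distr) auto
    also have "\<dots> = I" unfolding dW std_gaussian_vec_eq I_def
      by (subst nn_integral_density) auto
    finally show ?thesis .
  qed
  have step2: "I = (\<integral>\<^sup>+ x. ennreal (gd x) * ennreal (exp (- inner v (F x))) \<partial>lborel)"
    unfolding I_def
    by (subst nn_integral_lborel_uminus[symmetric]) (auto simp: gd_uminus Fneg)
  have "I + I = (\<integral>\<^sup>+ x. ennreal (gd x) * ennreal (exp (inner v (F x))) + ennreal (gd x) * ennreal (exp (- inner v (F x))) \<partial>lborel)"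
    by (subst nn_integral_add) (auto simp: I_def step2[symmetric])
  also have "\<dots> \<le> (\<integral>\<^sup>+ x. ennreal (gd x) * ennreal (exp (inner v x)) + ennreal (gd x) * ennreal (exp (inner (- v) x)) \<partial>lborel)"
  proof (intro nn_integral_mono)
    fix x
    have "exp (inner v (F x)) + exp (- inner v (F x)) \<le> exp (inner v x) + exp (inner (- v) x)"
      using cosh_like[of "inner v x"] by (auto simp: F_def)
    then have "gd x * (exp (inner v (F x)) + exp (- inner v (F x))) \<le> gd x * (exp (inner v x) + exp (inner (- v) x))"
      by (intro mult_left_mono gd_nonneg)
    then show "ennreal (gd x) * ennreal (exp (inner v (F x))) + ennreal (gd x) * ennreal (exp (- inner v (F x)))
       \<le> ennreal (gd x) * ennreal (exp (inner v x)) + ennreal (gd x) * ennreal (exp (inner (- v) x))"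
      by (simp add: ennreal_mult''[symmetric] gd_nonneg ennreal_plus[symmetric] distrib_left del: ennreal_plus)
  qed
  also have "\<dots> = ennreal (exp ((norm v)\<^sup>2 / 2)) + ennreal (exp ((norm v)\<^sup>2 / 2))"
    using J[of v] J[of "- v"] by (subst nn_integral_add) auto
  finally have "I \<le> ennreal (exp ((norm v)\<^sup>2 / 2))"
    by (meson add_strict_mono not_less)
  then show ?thesis using step1 by simp
qed

lemma transpose_norm_le:
  fixes H :: "real ^ 'n::finite ^ 'm::finite" and u :: "real ^ 'm"
  assumes "norm u = 1"
  shows "norm (transpose H *v u) \<le> op_norm H" "0 \<le> op_norm H"
proof -
  show nn: "0 \<le> op_norm H" unfolding op_norm_def by (rule onorm_pos_le) simp
  define z where "z = transpose H *v u"
  have "u v* H = z" unfolding z_def by (metis transpose_transpose vector_transpose_matrix)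
  then have "(norm z)\<^sup>2 = inner u (H *v z)"
    by (metis dot_lmul_matrix power2_norm_eq_inner)
  also have "\<dots> \<le> norm u * norm (H *v z)" by (rule norm_cauchy_schwarz)
  also have "\<dots> \<le> op_norm H * norm z"
    using onorm[OF matrix_vector_mul_bounded_linear, of H z] assms by (simp add: op_norm_def)
  finally have "norm z * norm z \<le> op_norm H * norm z" by (simp add: power2_eq_square)
  then show "norm (transpose H *v u) \<le> op_norm H"
    using nn unfolding z_def[symmetric]
    by (cases "norm z = 0") (auto simp: mult_le_cancel_right)
qed

theorem proposition13:
  fixes M :: "'a measure" and W :: "'a \<Rightarrow> real ^ 'n::finite" and A :: "(real ^ 'n) set"
  assumes "prob_space M"
    and "W \<in> borel_measurable M"
    and "distr M borel W = std_gaussian_vec"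
    and "A \<in> sets borel"
    and "\<And>x. x \<in> A \<Longrightarrow> - x \<in> A"
  shows "sub_gaussian M (\<lambda>\<omega>. if W \<omega> \<in> A then W \<omega> else 0) 4
    \<and> (\<forall>H :: real ^ 'n ^ 'm::finite.
         sub_gaussian M (\<lambda>\<omega>. H *v (if W \<omega> \<in> A then W \<omega> else 0)) (4 * (op_norm H)\<^sup>2))"
proof
  note K = key[OF assms]
  show "sub_gaussian M (\<lambda>\<omega>. if W \<omega> \<in> A then W \<omega> else 0) 4"
    unfolding sub_gaussian_def
  proof (intro allI impI)
    fix u :: "real ^ 'n" and l :: real
    assume u: "norm u = 1"
    have "(\<integral>\<^sup>+ \<omega>. ennreal (exp (l * inner u (if W \<omega> \<in> A then W \<omega> else 0))) \<partial>M)
       = (\<integral>\<^sup>+ \<omega>. ennreal (exp (inner (l *\<^sub>R u) (if W \<omega> \<in> A then W \<omega> else 0))) \<partial>M)"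
      by simp
    also have "\<dots> \<le> ennreal (exp ((norm (l *\<^sub>R u))\<^sup>2 / 2))" by (rule K)
    also have "\<dots> \<le> ennreal (exp (l\<^sup>2 * 4 / 2))"
      using u by (simp add: power_mult_distrib)
    finally show "(\<integral>\<^sup>+ \<omega>. ennreal (exp (l * inner u (if W \<omega> \<in> A then W \<omega> else 0))) \<partial>M)
       \<le> ennreal (exp (l\<^sup>2 * 4 / 2))" .
  qed
  show "\<forall>H :: real ^ 'n ^ 'm::finite.
         sub_gaussian M (\<lambda>\<omega>. H *v (if W \<omega> \<in> A then W \<omega> else 0)) (4 * (op_norm H)\<^sup>2)"
    unfolding sub_gaussian_def
  proof (intro allI impI)
    fix H :: "real ^ 'n ^ 'm" and u :: "real ^ 'm" and l :: real
    assume u: "norm u = 1"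
    have eq: "l * inner u (H *v y) = inner (l *\<^sub>R (transpose H *v u)) y" for y
      by (metis dot_lmul_matrix inner_scaleR_left transpose_transpose vector_transpose_matrix)
    have "(\<integral>\<^sup>+ \<omega>. ennreal (exp (l * inner u (H *v (if W \<omega> \<in> A then W \<omega> else 0)))) \<partial>M)
       = (\<integral>\<^sup>+ \<omega>. ennreal (exp (inner (l *\<^sub>R (transpose H *v u)) (if W \<omega> \<in> A then W \<omega> else 0))) \<partial>M)"
      by (simp only: eq)
    also have "\<dots> \<le> ennreal (exp ((norm (l *\<^sub>R (transpose H *v u)))\<^sup>2 / 2))" by (rule K)
    also have "\<dots> \<le> ennreal (exp (l\<^sup>2 * (4 * (op_norm H)\<^sup>2) / 2))"
    proof -
      have "(norm (transpose H *v u))\<^sup>2 \<le> (op_norm H)\<^sup>2"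
        using transpose_norm_le[OF u, of H] by (intro power_mono) auto
      then have "l\<^sup>2 * (norm (transpose H *v u))\<^sup>2 \<le> l\<^sup>2 * (4 * (op_norm H)\<^sup>2)"
        by (intro mult_left_mono) (auto intro: order_trans)
      then show ?thesis by (simp add: power_mult_distrib)
    qed
    finally show "(\<integral>\<^sup>+ \<omega>. ennreal (exp (l * inner u (H *v (if W \<omega> \<in> A then W \<omega> else 0)))) \<partial>M)
       \<le> ennreal (exp (l\<^sup>2 * (4 * (op_norm H)\<^sup>2) / 2))" .
  qed
qed

end
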